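(* Let $X, Y \subseteq \omega$, let $\mathcal{A}$ be a pca, let $a_\bot \neq a_\top$ be elements of $\mathcal{A}$, let $\gamma : \omega \to \mathcal{A}$ be a partial numbering, and let $d$ be a $Y$-computable $(a_\bot, a_\top)$-decider for $X$. If $\gamma$ has $Y$-c.e. inequivalence, then $X \le_T Y$.
   Context: A pca is a set with a partial binary application operation containing distinct $\mathrm{s},\mathrm{k}$ with $\mathrm{k}ab\downarrow=a$, $\mathrm{s}ab\downarrow$, $\mathrm{s}abc\simeq(ac)(bc)$. A partial numbering of $\mathcal{A}$ is a surjective partial function $\gamma:\omega\rightharpoonup\mathcal{A}$. $\gamma$ has $Y$-c.e. inequivalence if there is a $Y$-c.e. relation $R\subseteq\omega^2$ whose restriction to $\mathrm{dom}(\gamma)^2$ equals $\{(n,m)\in\mathrm{dom}(\gamma)^2:\gamma(n)\neq\gamma(m)\}$. A function $d:\omega\to\omega$ is an $(a_\bot,a_\top)$-decider for $X$ if for all $n$: $n\notin X\Rightarrow\gamma(d(n))=a_\bot$, and $n\in X\Rightarrow\gamma(d(n))=a_\top$. *)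

theory Defs
  imports Main "HOL-Library.Nat_Bijection"
begin

text \<open>A pca with carrier the type 'a, partial application app, and combinators s, k.
  Option equality is Kleene equality.\<close>

definition pca :: "('a \<Rightarrow> 'a \<Rightarrow> 'a option) \<Rightarrow> 'a \<Rightarrow> 'a \<Rightarrow> bool" where
  "pca app s k \<longleftrightarrow>
     s \<noteq> k \<and>
     (\<forall>a b. Option.bind (app k a) (\<lambda>ka. app ka b) = Some a) \<and>
     (\<forall>a b. Option.bind (app s a) (\<lambda>sa. app sa b) \<noteq> None) \<and>
     (\<forall>a b c.
        Option.bind (app s a) (\<lambda>sa. Option.bind (app sa b) (\<lambda>sab. app sab c)) =
        Option.bind (app a c) (\<lambda>u. Option.bind (app b c) (\<lambda>v. app u v)))"

text \<open>Unary partial functions on nat; tuples are coded with Cantor pairing prod_encode.\<close>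

fun prim_iter :: "(nat \<Rightarrow> nat option) \<Rightarrow> (nat \<Rightarrow> nat option) \<Rightarrow> nat \<Rightarrow> nat \<Rightarrow> nat option" where
  "prim_iter f g x 0 = f x"
| "prim_iter f g x (Suc k) =
     Option.bind (prim_iter f g x k) (\<lambda>r. g (prod_encode (x, prod_encode (k, r))))"

definition mu_op :: "(nat \<Rightarrow> nat option) \<Rightarrow> nat \<Rightarrow> nat option" where
  "mu_op f x =
     (if \<exists>n. f (prod_encode (x, n)) = Some 0 \<and> (\<forall>m<n. f (prod_encode (x, m)) \<noteq> None)
      then Some (LEAST n. f (prod_encode (x, n)) = Some 0 \<and> (\<forall>m<n. f (prod_encode (x, m)) \<noteq> None))
      else None)"

inductive orec :: "nat set \<Rightarrow> (nat \<Rightarrow> nat option) \<Rightarrow> bool" for Y :: "nat set" where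
  zero: "orec Y (\<lambda>n. Some 0)"
| succ: "orec Y (\<lambda>n. Some (Suc n))"
| left: "orec Y (\<lambda>n. Some (fst (prod_decode n)))"
| right: "orec Y (\<lambda>n. Some (snd (prod_decode n)))"
| orc: "orec Y (\<lambda>n. Some (if n \<in> Y then 1 else 0))"
| comp: "orec Y f \<Longrightarrow> orec Y g \<Longrightarrow> orec Y (\<lambda>n. Option.bind (g n) f)"
| pair: "orec Y f \<Longrightarrow> orec Y g \<Longrightarrow>
          orec Y (\<lambda>n. Option.bind (f n) (\<lambda>a. Option.bind (g n) (\<lambda>b. Some (prod_encode (a, b)))))"
| prim: "orec Y f \<Longrightarrow> orec Y g \<Longrightarrow>
          orec Y (\<lambda>n. prim_iter f g (fst (prod_decode n)) (snd (prod_decode n)))"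
| mu: "orec Y f \<Longrightarrow> orec Y (mu_op f)"

definition computable_in :: "nat set \<Rightarrow> (nat \<Rightarrow> nat) \<Rightarrow> bool" where
  "computable_in Y d \<longleftrightarrow> (\<exists>f. orec Y f \<and> (\<forall>n. f n = Some (d n)))"

definition turing_le :: "nat set \<Rightarrow> nat set \<Rightarrow> bool" where
  "turing_le X Y \<longleftrightarrow> computable_in Y (\<lambda>n. if n \<in> X then 1 else 0)"

definition ce_rel_in :: "nat set \<Rightarrow> (nat \<times> nat) set \<Rightarrow> bool" where
  "ce_rel_in Y R \<longleftrightarrow> (\<exists>f. orec Y f \<and> (\<forall>n m. (n, m) \<in> R \<longleftrightarrow> f (prod_encode (n, m)) \<noteq> None))"

definition partial_numbering :: "(nat \<Rightarrow> 'a option) \<Rightarrow> bool" where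
  "partial_numbering \<gamma> \<longleftrightarrow> (\<forall>a. \<exists>n. \<gamma> n = Some a)"

definition ce_inequivalence_in :: "nat set \<Rightarrow> (nat \<Rightarrow> 'a option) \<Rightarrow> bool" where
  "ce_inequivalence_in Y \<gamma> \<longleftrightarrow>
     (\<exists>R. ce_rel_in Y R \<and>
        (\<forall>n m. \<gamma> n \<noteq> None \<and> \<gamma> m \<noteq> None \<longrightarrow> ((n, m) \<in> R \<longleftrightarrow> \<gamma> n \<noteq> \<gamma> m)))"

definition decider :: "(nat \<Rightarrow> 'a option) \<Rightarrow> 'a \<Rightarrow> 'a \<Rightarrow> nat set \<Rightarrow> (nat \<Rightarrow> nat) \<Rightarrow> bool" where
  "decider \<gamma> a_bot a_top X d \<longleftrightarrow>
     (\<forall>n. (n \<notin> X \<longrightarrow> \<gamma> (d n) = Some a_bot) \<and> (n \<in> X \<longrightarrow> \<gamma> (d n) = Some a_top))"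

end

theory Submission
  imports Defs
begin

abbreviation pl :: "nat \<Rightarrow> nat" where "pl n \<equiv> fst (prod_decode n)"
abbreviation pr :: "nat \<Rightarrow> nat" where "pr n \<equiv> snd (prod_decode n)"

definition tot :: "nat set \<Rightarrow> (nat \<Rightarrow> nat) \<Rightarrow> bool" where
  "tot Y h \<longleftrightarrow> orec Y (\<lambda>n. Some (h n))"

fun prec :: "(nat \<Rightarrow> nat) \<Rightarrow> (nat \<Rightarrow> nat \<Rightarrow> nat \<Rightarrow> nat) \<Rightarrow> nat \<Rightarrow> nat \<Rightarrow> nat" where
  "prec F G x 0 = F x"
| "prec F G x (Suc k) = G x k (prec F G x k)"

lemma tot_comp: "tot Y h \<Longrightarrow> tot Y g \<Longrightarrow> tot Y (\<lambda>n. h (g n))"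
  unfolding tot_def
proof -
  assume a: "orec Y (\<lambda>n. Some (h n))" "orec Y (\<lambda>n. Some (g n))"
  have "orec Y (\<lambda>n. Option.bind ((\<lambda>n. Some (g n)) n) (\<lambda>n. Some (h n)))"
    by (rule orec.comp[OF a])
  then show "orec Y (\<lambda>n. Some (h (g n)))" by simp
qed

lemma tot_pair: "tot Y f \<Longrightarrow> tot Y g \<Longrightarrow> tot Y (\<lambda>n. prod_encode (f n, g n))"
  unfolding tot_def
proof -
  assume a: "orec Y (\<lambda>n. Some (f n))" "orec Y (\<lambda>n. Some (g n))"
  have "orec Y (\<lambda>n. Option.bind ((\<lambda>n. Some (f n)) n) (\<lambda>a. Option.bind ((\<lambda>n. Some (g n)) n) (\<lambda>b. Some (prod_encode (a, b)))))"
    by (rule orec.pair[OF a])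
  then show "orec Y (\<lambda>n. Some (prod_encode (f n, g n)))" by simp
qed

lemma tot_fst0: "tot Y pl" unfolding tot_def by (rule orec.left)
lemma tot_snd0: "tot Y pr" unfolding tot_def by (rule orec.right)
lemma tot_suc0: "tot Y Suc" unfolding tot_def by (rule orec.succ)
lemma tot_zero: "tot Y (\<lambda>n. 0)" unfolding tot_def by (rule orec.zero)
lemma tot_orc0: "tot Y (\<lambda>n. if n \<in> Y then 1 else 0)" unfolding tot_def by (rule orec.orc)

lemma tot_id: "tot Y (\<lambda>n. n)"
  using tot_pair[OF tot_fst0 tot_snd0, of Y] by simp

lemma tot_const: "tot Y (\<lambda>n. c)"
proof (induction c)
  case 0 then show ?case by (rule tot_zero)
next
  case (Suc c) then show ?case using tot_comp[OF tot_suc0 Suc] by simp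
qed

lemma tot_fst: "tot Y f \<Longrightarrow> tot Y (\<lambda>n. fst (prod_decode (f n)))"
  by (rule tot_comp[OF tot_fst0])
lemma tot_snd: "tot Y f \<Longrightarrow> tot Y (\<lambda>n. snd (prod_decode (f n)))"
  by (rule tot_comp[OF tot_snd0])
lemma tot_Suc: "tot Y f \<Longrightarrow> tot Y (\<lambda>n. Suc (f n))"
  by (rule tot_comp[OF tot_suc0])
lemma tot_orc: "tot Y f \<Longrightarrow> tot Y (\<lambda>n. if f n \<in> Y then 1 else 0)"
  using tot_comp[OF tot_orc0] by simp

lemma prim_iter_tot:
  "prim_iter (\<lambda>n. Some (F n)) (\<lambda>q. Some (G (pl q) (pl (pr q)) (pr (pr q)))) x k = Some (prec F G x k)"
  by (induction k) auto

lemma tot_prec0: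
  assumes "tot Y F" "tot Y (\<lambda>q. G (pl q) (pl (pr q)) (pr (pr q)))"
  shows "tot Y (\<lambda>n. prec F G (pl n) (pr n))"
proof -
  have "orec Y (\<lambda>n. prim_iter (\<lambda>n. Some (F n)) (\<lambda>q. Some (G (pl q) (pl (pr q)) (pr (pr q)))) (pl n) (pr n))"
    using assms unfolding tot_def by (rule orec.prim)
  then show ?thesis unfolding tot_def prim_iter_tot .
qed

lemma tot_prec:
  assumes "tot Y F" "tot Y (\<lambda>q. G (pl q) (pl (pr q)) (pr (pr q)))" "tot Y xf" "tot Y kf"
  shows "tot Y (\<lambda>n. prec F G (xf n) (kf n))"
  using tot_comp[OF tot_prec0[OF assms(1,2)] tot_pair[OF assms(3,4)]] by simp

lemma tot_case:
  assumes "tot Y c" "tot Y a" "tot Y (\<lambda>p. b (pl p) (pr p))"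
  shows "tot Y (\<lambda>n. case c n of 0 \<Rightarrow> a n | Suc j \<Rightarrow> b n j)"
proof -
  have "tot Y (\<lambda>n. prec a (\<lambda>x k r. b x k) n (c n))"
  proof (rule tot_prec[OF assms(2) _ tot_id assms(1)])
    show "tot Y (\<lambda>q. b (pl q) (pl (pr q)))"
      using tot_comp[OF assms(3) tot_pair[OF tot_fst0 tot_fst[OF tot_snd0]]] by simp
  qed
  moreover have "prec a (\<lambda>x k r. b x k) n (c n) = (case c n of 0 \<Rightarrow> a n | Suc j \<Rightarrow> b n j)" for n
    by (cases "c n") auto
  ultimately show ?thesis by simp
qed

lemmas tot_intros = tot_id tot_const tot_fst tot_snd tot_Suc tot_pair tot_orc tot_case tot_prec



definition approx :: "nat set \<Rightarrow> (nat \<Rightarrow> nat option) \<Rightarrow> (nat \<Rightarrow> nat) \<Rightarrow> bool" where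
  "approx Y f h \<longleftrightarrow> tot Y h \<and>
     (\<forall>x t v. h (prod_encode (x, t)) = Suc v \<longrightarrow> f x = Some v) \<and>
     (\<forall>x v. f x = Some v \<longrightarrow> (\<exists>t0. \<forall>t\<ge>t0. h (prod_encode (x, t)) = Suc v))"

lemma approx_const:
  assumes "tot Y (\<lambda>p. Suc (F (pl p)))"
  shows "approx Y (\<lambda>n. Some (F n)) (\<lambda>p. Suc (F (pl p)))"
  using assms unfolding approx_def by auto

lemma common_bound:
  fixes n :: nat and P :: "nat \<Rightarrow> nat \<Rightarrow> bool"
  assumes "\<forall>m\<le>n. \<exists>t0. \<forall>t\<ge>t0. P m t"
  shows "\<exists>T. \<forall>m\<le>n. \<forall>t\<ge>T. P m t"
  using assms
proof (induction n)
  case 0 then show ?case by auto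
next
  case (Suc n)
  then obtain T where T: "\<forall>m\<le>n. \<forall>t\<ge>T. P m t" by auto
  obtain T' where T': "\<forall>t\<ge>T'. P (Suc n) t" using Suc.prems by auto
  show ?case
    apply (rule exI[of _ "max T T'"])
    using T T' by (metis le_Suc_eq max.bounded_iff)
qed

lemma approx_exists: "orec Y f \<Longrightarrow> \<exists>h. approx Y f h"
proof (induction rule: orec.induct)
  case zero
  show ?case by (rule exI, rule approx_const[where F="\<lambda>n. 0", simplified], intro tot_intros)
next
  case succ
  show ?case by (rule exI, rule approx_const[where F="Suc"], intro tot_intros)
next
  case left
  show ?case by (rule exI, rule approx_const[where F="pl"], intro tot_intros)
next
  case right
  show ?case by (rule exI, rule approx_const[where F="pr"], intro tot_intros)
next
  case orc
  show ?case by (rule exI, rule approx_const[where F="\<lambda>n. if n \<in> Y then 1 else 0"], intro tot_intros)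
next
  case (comp f g)
  then obtain hf hg where hf: "approx Y f hf" and hg: "approx Y g hg" by auto
  define h where "h p = (case hg p of 0 \<Rightarrow> 0 | Suc v \<Rightarrow> hf (prod_encode (v, pr p)))" for p
  have "approx Y (\<lambda>n. Option.bind (g n) f) h"
    unfolding approx_def
  proof (intro conjI allI impI)
    have tf: "tot Y hf" and tg: "tot Y hg" using hf hg approx_def by auto
    show "tot Y h" unfolding h_def by (intro tot_intros tot_comp[OF tf] tg)
  next
    fix x t v assume "h (prod_encode (x, t)) = Suc v"
    then show "Option.bind (g x) f = Some v" using hf hg unfolding h_def approx_def
      by (auto split: nat.splits)
  next
    fix x v assume "Option.bind (g x) f = Some v"
    then obtain w where w: "g x = Some w" "f w = Some v"
      by (cases "g x") auto
    obtain t1 where t1: "\<forall>t\<ge>t1. hg (prod_encode (x, t)) = Suc w" using hg w approx_def by metis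
    obtain t2 where t2: "\<forall>t\<ge>t2. hf (prod_encode (w, t)) = Suc v" using hf w approx_def by metis
    show "\<exists>t0. \<forall>t\<ge>t0. h (prod_encode (x, t)) = Suc v"
      by (rule exI[of _ "max t1 t2"]) (simp add: h_def t1 t2)
  qed
  then show ?case by blast
next
  case (pair f g)
  then obtain hf hg where hf: "approx Y f hf" and hg: "approx Y g hg" by auto
  define h where "h p = (case hf p of 0 \<Rightarrow> 0 | Suc a \<Rightarrow> (case hg p of 0 \<Rightarrow> 0 | Suc b \<Rightarrow> Suc (prod_encode (a, b))))" for p
  have "approx Y (\<lambda>n. Option.bind (f n) (\<lambda>a. Option.bind (g n) (\<lambda>b. Some (prod_encode (a, b))))) h"
    unfolding approx_def
  proof (intro conjI allI impI)
    have tf: "tot Y hf" and tg: "tot Y hg" using hf hg approx_def by auto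
    show "tot Y h" unfolding h_def by (intro tot_intros tot_comp[OF tf] tot_comp[OF tg] tf tg)
  next
    fix x t v assume "h (prod_encode (x, t)) = Suc v"
    then show "Option.bind (f x) (\<lambda>a. Option.bind (g x) (\<lambda>b. Some (prod_encode (a, b)))) = Some v"
      using hf hg unfolding h_def approx_def
      by (auto split: nat.splits)
  next
    fix x v assume "Option.bind (f x) (\<lambda>a. Option.bind (g x) (\<lambda>b. Some (prod_encode (a, b)))) = Some v"
    then obtain a b where w: "f x = Some a" "g x = Some b" "v = prod_encode (a, b)"
      by (cases "f x"; cases "g x") auto
    obtain t1 where t1: "\<forall>t\<ge>t1. hf (prod_encode (x, t)) = Suc a" using hf w approx_def by metis
    obtain t2 where t2: "\<forall>t\<ge>t2. hg (prod_encode (x, t)) = Suc b" using hg w approx_def by metis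
    show "\<exists>t0. \<forall>t\<ge>t0. h (prod_encode (x, t)) = Suc v"
      by (rule exI[of _ "max t1 t2"]) (simp add: h_def t1 t2 w)
  qed
  then show ?case by blast
next
  case (prim f g)
  then obtain hf hg where hf: "approx Y f hf" and hg: "approx Y g hg" by auto
  define G where "G x' k r = (case r of 0 \<Rightarrow> 0 | Suc r' \<Rightarrow> hg (prod_encode (prod_encode (pl x', prod_encode (k, r')), pr x')))" for x' k r
  define h where "h p = prec hf G (prod_encode (pl (pl p), pr p)) (pr (pl p))" for p
  have sound: "prec hf G (prod_encode (x, t)) k = Suc v \<Longrightarrow> prim_iter f g x k = Some v" for x t k v
  proof (induction k arbitrary: v)
    case 0 then show ?case using hf approx_def by auto
  next
    case (Suc k)
    obtain r where r: "prec hf G (prod_encode (x, t)) k = Suc r"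
    proof (cases "prec hf G (prod_encode (x, t)) k")
      case 0
      have "G (prod_encode (x, t)) k 0 = 0" by (simp add: G_def)
      then show ?thesis using Suc.prems 0 by simp
    next
      case (Suc r) then show ?thesis using that by simp
    qed
    then have "hg (prod_encode (prod_encode (x, prod_encode (k, r)), t)) = Suc v"
      using Suc.prems by (simp only: prec.simps r) (simp add: G_def)
    then show ?case using Suc.IH[OF r] hg approx_def by auto
  qed
  have event: "prim_iter f g x k = Some v \<Longrightarrow> \<exists>t0. \<forall>t\<ge>t0. prec hf G (prod_encode (x, t)) k = Suc v" for x k v
  proof (induction k arbitrary: v)
    case 0 then show ?case using hf approx_def by auto
  next
    case (Suc k)
    then obtain r where r: "prim_iter f g x k = Some r" "g (prod_encode (x, prod_encode (k, r))) = Some v"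
      by (cases "prim_iter f g x k") auto
    obtain t1 where t1: "\<forall>t\<ge>t1. prec hf G (prod_encode (x, t)) k = Suc r" using Suc.IH[OF r(1)] by auto
    obtain t2 where t2: "\<forall>t\<ge>t2. hg (prod_encode (prod_encode (x, prod_encode (k, r)), t)) = Suc v"
      using hg r approx_def by metis
    show ?case
    proof (rule exI[of _ "max t1 t2"], intro allI impI)
      fix t assume "max t1 t2 \<le> t"
      then show "prec hf G (prod_encode (x, t)) (Suc k) = Suc v"
        using t1 t2 by (simp only: prec.simps) (simp add: G_def)
    qed
  qed
  have "approx Y (\<lambda>n. prim_iter f g (pl n) (pr n)) h"
    unfolding approx_def
  proof (intro conjI allI impI)
    have tf: "tot Y hf" and tg: "tot Y hg" using hf hg approx_def by auto
    show "tot Y h" unfolding h_def G_def by (intro tot_intros tot_comp[OF tf] tot_comp[OF tg] tf tg)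
  next
    fix x t v assume "h (prod_encode (x, t)) = Suc v"
    then show "prim_iter f g (pl x) (pr x) = Some v" using sound unfolding h_def by simp
  next
    fix x v assume "prim_iter f g (pl x) (pr x) = Some v"
    from event[OF this] show "\<exists>t0. \<forall>t\<ge>t0. h (prod_encode (x, t)) = Suc v"
      unfolding h_def by simp
  qed
  then show ?case by blast
next
  case (mu f)
  then obtain hf where hf: "approx Y f hf" by auto
  have tf: "tot Y hf" using hf approx_def by auto
  have hfs: "hf (prod_encode (x, t)) = Suc v \<Longrightarrow> f x = Some v" for x t v
    using hf approx_def by auto
  define G where "G x' k r = (case r of 0 \<Rightarrow> (case hf (prod_encode (prod_encode (pl x', k), pr x')) of
      0 \<Rightarrow> 1 | Suc w \<Rightarrow> (case w of 0 \<Rightarrow> Suc (Suc k) | Suc _ \<Rightarrow> 0)) | Suc r' \<Rightarrow> Suc r')" for x' k r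
  define h where "h p = (case prec (\<lambda>_. 0) G p (pr p) of 0 \<Rightarrow> 0 | Suc r \<Rightarrow> r)" for p
  have L1: "(prec (\<lambda>_. 0) G (prod_encode (x, t)) k = 0 \<longrightarrow>
      (\<forall>m<k. \<exists>w. hf (prod_encode (prod_encode (x, m), t)) = Suc (Suc w))) \<and>
     (\<forall>n. prec (\<lambda>_. 0) G (prod_encode (x, t)) k = Suc (Suc n) \<longrightarrow>
       n < k \<and> hf (prod_encode (prod_encode (x, n), t)) = Suc 0 \<and>
      (\<forall>m<n. \<exists>w. hf (prod_encode (prod_encode (x, m), t)) = Suc (Suc w)))" for x t k
  proof (induction k)
    case 0 then show ?case by simp
  next
    case (Suc k)
    have e: "prec (\<lambda>_. 0) G (prod_encode (x, t)) (Suc k) = G (prod_encode (x, t)) k (prec (\<lambda>_. 0) G (prod_encode (x, t)) k)"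
      by simp
    show ?case
    proof (cases "prec (\<lambda>_. 0) G (prod_encode (x, t)) k")
      case 0
      then have A: "\<forall>m<k. \<exists>w. hf (prod_encode (prod_encode (x, m), t)) = Suc (Suc w)" using Suc.IH by simp
      show ?thesis
      proof (cases "hf (prod_encode (prod_encode (x, k), t))")
        case 0 then show ?thesis unfolding e using \<open>prec _ _ _ k = 0\<close> by (simp add: G_def)
      next
        case (Suc w)
        show ?thesis
        proof (cases w)
          case 0 then show ?thesis unfolding e using \<open>prec _ _ _ k = 0\<close> Suc A by (simp add: G_def)
        next
          case (Suc w')
          have v: "prec (\<lambda>_. 0) G (prod_encode (x, t)) (Suc k) = 0"
            unfolding e using \<open>prec _ _ _ k = 0\<close> \<open>hf _ = Suc w\<close> Suc by (simp add: G_def)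
          have "\<forall>m<Suc k. \<exists>w. hf (prod_encode (prod_encode (x, m), t)) = Suc (Suc w)"
          proof (intro allI impI)
            fix m assume "m < Suc k"
            then consider "m < k" | "m = k" by linarith
            then show "\<exists>w. hf (prod_encode (prod_encode (x, m), t)) = Suc (Suc w)"
              using A \<open>hf _ = Suc w\<close> Suc by cases auto
          qed
          then show ?thesis using v by simp
        qed
      qed
    next
      case (Suc r)
      have v: "prec (\<lambda>_. 0) G (prod_encode (x, t)) (Suc k) = Suc r"
        unfolding e using Suc by (simp add: G_def)
      show ?thesis using Suc.IH Suc v less_SucI by auto
    qed
  qed
  have L2: "prec (\<lambda>_. 0) G (prod_encode (x, t)) k = (if k \<le> n then 0 else Suc (Suc n))"
    if A: "\<forall>m<n. \<exists>w. hf (prod_encode (prod_encode (x, m), t)) = Suc (Suc w)"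
      and B: "hf (prod_encode (prod_encode (x, n), t)) = Suc 0" for x t k n
  proof (induction k)
    case 0 then show ?case by simp
  next
    case (Suc k)
    have e: "prec (\<lambda>_. 0) G (prod_encode (x, t)) (Suc k) = G (prod_encode (x, t)) k (prec (\<lambda>_. 0) G (prod_encode (x, t)) k)"
      by simp
    show ?case
    proof (cases "k < n")
      case True
      then obtain w where "hf (prod_encode (prod_encode (x, k), t)) = Suc (Suc w)" using A by auto
      moreover have p: "prec (\<lambda>_. 0) G (prod_encode (x, t)) k = 0" using Suc.IH True by simp
      ultimately show ?thesis unfolding e p using True by (simp add: G_def)
    next
      case False
      show ?thesis
      proof (cases "k = n")
        case True
        have p: "prec (\<lambda>_. 0) G (prod_encode (x, t)) k = 0" using Suc.IH True by simp
        show ?thesis unfolding e p using True B by (simp add: G_def)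
      next
        case False
        have p: "prec (\<lambda>_. 0) G (prod_encode (x, t)) k = Suc (Suc n)" using Suc.IH False \<open>\<not> k < n\<close> by simp
        show ?thesis unfolding e p using False \<open>\<not> k < n\<close> by (simp add: G_def)
      qed
    qed
  qed
  have "approx Y (mu_op f) h"
    unfolding approx_def
  proof (intro conjI allI impI)
    show "tot Y h" unfolding h_def G_def by (intro tot_intros tot_comp[OF tf] tf)
  next
    fix x t v assume hv: "h (prod_encode (x, t)) = Suc v"
    then have S: "prec (\<lambda>_. 0) G (prod_encode (x, t)) t = Suc (Suc v)"
      unfolding h_def by (simp split: nat.splits)
    from L1[of x t t] S have
      B: "hf (prod_encode (prod_encode (x, v), t)) = Suc 0" and
      A: "\<forall>m<v. \<exists>w. hf (prod_encode (prod_encode (x, m), t)) = Suc (Suc w)" by auto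
    have fv: "f (prod_encode (x, v)) = Some 0" using hfs[OF B] .
    have fm: "\<exists>w. f (prod_encode (x, m)) = Some (Suc w)" if mlt: "m < v" for m
    proof -
      obtain w where "hf (prod_encode (prod_encode (x, m), t)) = Suc (Suc w)" using A mlt by blast
      then show ?thesis using hfs by blast
    qed
    let ?P = "\<lambda>n. f (prod_encode (x, n)) = Some 0 \<and> (\<forall>m<n. f (prod_encode (x, m)) \<noteq> None)"
    have Pv: "?P v"
    proof (intro conjI allI impI)
      show "f (prod_encode (x, v)) = Some 0" by (rule fv)
    next
      fix m assume "m < v"
      then obtain w where "f (prod_encode (x, m)) = Some (Suc w)" using fm by blast
      then show "f (prod_encode (x, m)) \<noteq> None" by simp
    qed
    have L: "(LEAST n. ?P n) = v"
    proof (rule Least_equality[where P="?P"])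
      show "?P v" by (rule Pv)
    next
      fix y assume Py: "?P y"
      show "v \<le> y"
      proof (rule ccontr)
        assume "\<not> v \<le> y"
        then have "y < v" by simp
        then obtain w where "f (prod_encode (x, y)) = Some (Suc w)" using fm by blast
        with Py show False by simp
      qed
    qed
    have ex: "\<exists>n. ?P n" using Pv by blast
    have "mu_op f x = Some (LEAST n. ?P n)" unfolding mu_op_def by (rule if_P[OF ex])
    then show "mu_op f x = Some v" unfolding L .
  next
    fix x v assume mv: "mu_op f x = Some v"
    let ?P = "\<lambda>n. f (prod_encode (x, n)) = Some 0 \<and> (\<forall>m<n. f (prod_encode (x, m)) \<noteq> None)"
    have ex: "\<exists>n. ?P n"
    proof (rule ccontr)
      assume "\<not> (\<exists>n. ?P n)"
      then have "mu_op f x = None" unfolding mu_op_def by (rule if_not_P)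
      with mv show False by simp
    qed
    have "mu_op f x = Some (LEAST n. ?P n)" unfolding mu_op_def by (rule if_P[OF ex])
    then have "Some v = Some (LEAST n. ?P n)" unfolding mv .
    then have vL: "v = (LEAST n. ?P n)" by (rule option.inject[THEN iffD1])
    have Pv: "?P v" unfolding vL by (rule LeastI_ex[OF ex])
    have fm: "\<exists>w. f (prod_encode (x, m)) = Some (Suc w)" if "m < v" for m
    proof -
      from that have "m < (LEAST n. ?P n)" unfolding vL .
      then have nP: "\<not> ?P m" by (rule not_less_Least)
      have nn: "\<forall>m'<m. f (prod_encode (x, m')) \<noteq> None" using Pv that by auto
      have n0: "f (prod_encode (x, m)) \<noteq> Some 0" using nP nn by blast
      have n1: "f (prod_encode (x, m)) \<noteq> None" using Pv that by blast
      show ?thesis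
      proof (cases "f (prod_encode (x, m))")
        case None with n1 show ?thesis by simp
      next
        case (Some u)
        with n0 have "u \<noteq> 0" by simp
        then obtain w where "u = Suc w" using not0_implies_Suc by blast
        with Some show ?thesis by blast
      qed
    qed
    have hfe: "\<And>z u. f z = Some u \<Longrightarrow> \<exists>t0. \<forall>t\<ge>t0. hf (prod_encode (z, t)) = Suc u"
      using hf unfolding approx_def by blast
    have ev: "\<forall>m\<le>v. \<exists>t0. \<forall>t\<ge>t0. (\<exists>w. hf (prod_encode (prod_encode (x, m), t)) = Suc w \<and> f (prod_encode (x, m)) = Some w)"
    proof (intro allI impI)
      fix m assume mv': "m \<le> v"
      obtain w where fw: "f (prod_encode (x, m)) = Some w"
      proof (cases "m = v")
        case True then show ?thesis using Pv that by blast
      next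
        case False
        with mv' have "m < v" by simp
        then show ?thesis using fm that by blast
      qed
      obtain t0 where "\<forall>t\<ge>t0. hf (prod_encode (prod_encode (x, m), t)) = Suc w"
        using hfe[OF fw] by blast
      then show "\<exists>t0. \<forall>t\<ge>t0. (\<exists>w. hf (prod_encode (prod_encode (x, m), t)) = Suc w \<and> f (prod_encode (x, m)) = Some w)"
        using fw by blast
    qed
    obtain T where T: "\<forall>m\<le>v. \<forall>t\<ge>T. \<exists>w. hf (prod_encode (prod_encode (x, m), t)) = Suc w \<and> f (prod_encode (x, m)) = Some w"
      using common_bound[OF ev] by blast
    show "\<exists>t0. \<forall>t\<ge>t0. h (prod_encode (x, t)) = Suc v"
    proof (rule exI[of _ "max T (Suc v)"], intro allI impI)
      fix t assume t: "max T (Suc v) \<le> t"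
      then have tT: "T \<le> t" and tv: "v < t" by auto
      have A: "\<forall>m<v. \<exists>w. hf (prod_encode (prod_encode (x, m), t)) = Suc (Suc w)"
      proof (intro allI impI)
        fix m assume "m < v"
        then have "m \<le> v" by simp
        then obtain w where w: "hf (prod_encode (prod_encode (x, m), t)) = Suc w" "f (prod_encode (x, m)) = Some w"
          using T tT by blast
        obtain w' where "f (prod_encode (x, m)) = Some (Suc w')" using fm[OF \<open>m < v\<close>] by blast
        with w show "\<exists>w. hf (prod_encode (prod_encode (x, m), t)) = Suc (Suc w)" by auto
      qed
      obtain w where w: "hf (prod_encode (prod_encode (x, v), t)) = Suc w" "f (prod_encode (x, v)) = Some w"
        using T tT by blast
      have B: "hf (prod_encode (prod_encode (x, v), t)) = Suc 0"
        using w Pv by simp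
      have "prec (\<lambda>_. 0) G (prod_encode (x, t)) t = Suc (Suc v)"
        using L2[OF A B, of t] tv by simp
      then show "h (prod_encode (x, t)) = Suc v"
        unfolding h_def by simp
    qed
  qed
  then show ?case by blast
qed


theorem theorem3p7:
  fixes X Y :: "nat set"
    and app :: "'a \<Rightarrow> 'a \<Rightarrow> 'a option" and s k :: 'a
    and a_bot a_top :: 'a
    and \<gamma> :: "nat \<Rightarrow> 'a option"
    and d :: "nat \<Rightarrow> nat"
  assumes "pca app s k"
    and "a_bot \<noteq> a_top"
    and "partial_numbering \<gamma>"
    and "computable_in Y d"
    and "decider \<gamma> a_bot a_top X d"
    and "ce_inequivalence_in Y \<gamma>"
  shows "turing_le X Y"
proof -
  obtain nb where nb: "\<gamma> nb = Some a_bot" using assms(3) unfolding partial_numbering_def by blast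
  obtain nt where nt: "\<gamma> nt = Some a_top" using assms(3) unfolding partial_numbering_def by blast
  obtain R where R: "ce_rel_in Y R"
    and Req: "\<And>n m. \<gamma> n \<noteq> None \<Longrightarrow> \<gamma> m \<noteq> None \<Longrightarrow> ((n, m) \<in> R \<longleftrightarrow> \<gamma> n \<noteq> \<gamma> m)"
    using assms(6) unfolding ce_inequivalence_in_def by blast
  obtain fR where fR: "orec Y fR" and fReq: "\<And>n m. (n, m) \<in> R \<longleftrightarrow> fR (prod_encode (n, m)) \<noteq> None"
    using R unfolding ce_rel_in_def by blast
  obtain hR where hR: "approx Y fR hR" using approx_exists[OF fR] by blast
  have thR: "tot Y hR" using hR approx_def by blast
  have hRs: "\<And>x t v. hR (prod_encode (x, t)) = Suc v \<Longrightarrow> fR x = Some v"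
    using hR approx_def by blast
  have hRe: "\<And>x v. fR x = Some v \<Longrightarrow> \<exists>t0. \<forall>t\<ge>t0. hR (prod_encode (x, t)) = Suc v"
    using hR approx_def by blast
  obtain fd where fd: "orec Y fd" "\<And>n. fd n = Some (d n)"
    using assms(4) unfolding computable_in_def by blast
  have "fd = (\<lambda>n. Some (d n))" using fd(2) by (rule ext)
  then have td: "tot Y d" unfolding tot_def using fd(1) by simp
  have dec: "\<And>n. n \<notin> X \<Longrightarrow> \<gamma> (d n) = Some a_bot" "\<And>n. n \<in> X \<Longrightarrow> \<gamma> (d n) = Some a_top"
    using assms(5) unfolding decider_def by blast+
  have defd: "\<gamma> (d n) \<noteq> None" for n using dec[of n] by (cases "n \<in> X") auto
  have RX: "n \<in> X \<Longrightarrow> (d n, nb) \<in> R" for n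
    using Req[OF defd] nb dec(2)[of n] assms(2) by simp
  have RnX: "n \<notin> X \<Longrightarrow> (d n, nt) \<in> R" for n
    using Req[OF defd] nt dec(1)[of n] assms(2) by simp
  have sb: "hR (prod_encode (prod_encode (d n, nb), t)) = Suc v \<Longrightarrow> n \<in> X" for n t v
  proof -
    assume "hR (prod_encode (prod_encode (d n, nb), t)) = Suc v"
    then have "fR (prod_encode (d n, nb)) = Some v" by (rule hRs)
    then have "(d n, nb) \<in> R" using fReq by simp
    then have "\<gamma> (d n) \<noteq> \<gamma> nb" using Req[OF defd] nb by simp
    then show "n \<in> X" using dec(1)[of n] nb by auto
  qed
  have st: "hR (prod_encode (prod_encode (d n, nt), t)) = Suc v \<Longrightarrow> n \<notin> X" for n t v
  proof -
    assume "hR (prod_encode (prod_encode (d n, nt), t)) = Suc v"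
    then have "fR (prod_encode (d n, nt)) = Some v" by (rule hRs)
    then have "(d n, nt) \<in> R" using fReq by simp
    then have "\<gamma> (d n) \<noteq> \<gamma> nt" using Req[OF defd] nt by simp
    then show "n \<notin> X" using dec(2)[of n] nt by auto
  qed
  define S :: "nat \<Rightarrow> nat" where "S p = (case hR (prod_encode (prod_encode (d (pl p), nb), pr p)) of
     0 \<Rightarrow> (case hR (prod_encode (prod_encode (d (pl p), nt), pr p)) of 0 \<Rightarrow> 1 | Suc _ \<Rightarrow> 0)
     | Suc _ \<Rightarrow> 0)" for p
  define C :: "nat \<Rightarrow> nat" where "C q = (case hR (prod_encode (prod_encode (d (pl q), nb), pr q)) of 0 \<Rightarrow> 0 | Suc _ \<Rightarrow> 1)" for q
  have tS: "tot Y S" unfolding S_def by (intro tot_intros tot_comp[OF thR] tot_comp[OF td])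
  have tC: "tot Y C" unfolding C_def by (intro tot_intros tot_comp[OF thR] tot_comp[OF td])
  have om: "orec Y (mu_op (\<lambda>p. Some (S p)))" using tS unfolding tot_def by (rule orec.mu)
  have op: "orec Y (\<lambda>n. Option.bind ((\<lambda>n. Some n) n) (\<lambda>a. Option.bind (mu_op (\<lambda>p. Some (S p)) n) (\<lambda>b. Some (prod_encode (a, b)))))"
    using tot_id[of Y] om unfolding tot_def by (rule orec.pair)
  have oc: "orec Y (\<lambda>n. Option.bind ((\<lambda>n. Option.bind ((\<lambda>n. Some n) n) (\<lambda>a. Option.bind (mu_op (\<lambda>p. Some (S p)) n) (\<lambda>b. Some (prod_encode (a, b))))) n) (\<lambda>q. Some (C q)))"
    using tC op unfolding tot_def by (rule orec.comp)
  have val: "Option.bind ((\<lambda>n. Option.bind ((\<lambda>n. Some n) n) (\<lambda>a. Option.bind (mu_op (\<lambda>p. Some (S p)) n) (\<lambda>b. Some (prod_encode (a, b))))) n) (\<lambda>q. Some (C q))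
      = Some (if n \<in> X then 1 else 0)" for n
  proof -
    have ext: "\<exists>t. S (prod_encode (n, t)) = 0"
    proof (cases "n \<in> X")
      case True
      then have "fR (prod_encode (d n, nb)) \<noteq> None" using RX fReq by blast
      then obtain v where "fR (prod_encode (d n, nb)) = Some v" by blast
      then obtain t0 where "\<forall>t\<ge>t0. hR (prod_encode (prod_encode (d n, nb), t)) = Suc v" using hRe by blast
      then have "hR (prod_encode (prod_encode (d n, nb), t0)) = Suc v" by blast
      then have "S (prod_encode (n, t0)) = 0" unfolding S_def by simp
      then show ?thesis by blast
    next
      case False
      then have "fR (prod_encode (d n, nt)) \<noteq> None" using RnX fReq by blast
      then obtain v where "fR (prod_encode (d n, nt)) = Some v" by blast
      then obtain t0 where "\<forall>t\<ge>t0. hR (prod_encode (prod_encode (d n, nt), t)) = Suc v" using hRe by blast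
      then have h1: "hR (prod_encode (prod_encode (d n, nt), t0)) = Suc v" by blast
      have "S (prod_encode (n, t0)) = 0" unfolding S_def using h1 by (simp split: nat.splits)
      then show ?thesis by blast
    qed
    let ?P = "\<lambda>t. Some (S (prod_encode (n, t))) = Some 0 \<and> (\<forall>m<t. Some (S (prod_encode (n, m))) \<noteq> None)"
    have ex: "\<exists>t. ?P t" using ext by simp
    have mu: "mu_op (\<lambda>p. Some (S p)) n = Some (LEAST t. ?P t)" unfolding mu_op_def by (rule if_P[OF ex])
    define t where "t = (LEAST t. ?P t)"
    have Pt: "?P t" unfolding t_def by (rule LeastI_ex[OF ex])
    then have S0: "S (prod_encode (n, t)) = 0" by simp
    have "C (prod_encode (n, t)) = (if n \<in> X then 1 else 0)"
    proof (cases "hR (prod_encode (prod_encode (d n, nb), t))")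
      case 0
      then obtain v where "hR (prod_encode (prod_encode (d n, nt), t)) = Suc v"
        using S0 unfolding S_def by (simp split: nat.splits)
      then have "n \<notin> X" by (rule st)
      then show ?thesis unfolding C_def using 0 by simp
    next
      case (Suc v)
      then have "n \<in> X" by (rule sb)
      then show ?thesis unfolding C_def using Suc by simp
    qed
    then show ?thesis using mu unfolding t_def[symmetric] by simp
  qed
  show ?thesis unfolding turing_le_def computable_in_def
    using oc val by blast
qed

end
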